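(* Let $p$ be an odd prime and let $\alpha,\beta\in\mathbb{Q}_p$. Suppose that the Browkin $p$-adic continued fraction expansions of $\alpha$ and $\beta$ have the same first $n+1$ partial quotients $b_0,b_1,\ldots,b_n$, and let $B_n$ be defined from these partial quotients by $B_{-2}=1$, $B_{-1}=0$, $B_i=b_iB_{i-1}+B_{i-2}$. Then $$\lvert \alpha-\beta\rvert_p<\frac{1}{\lvert B_n\rvert_p^2}.$$
   Context: Throughout, $p$ is an odd prime and $\lvert\cdot\rvert_p$ is the $p$-adic absolute value. Every $x\in\mathbb{Q}_p$ has a unique expansion $x=\sum_{i\ge r}a_ip^i$ with $r\in\mathbb{Z}$ and $a_i\in\{-\frac{p-1}{2},\ldots,\frac{p-1}{2}\}$; Browkin's function is $s(x)=\sum_{i=r}^{0}a_ip^i$ (so $s(x)=0$ if $r>0$). The Browkin continued fraction expansion $[b_0,b_1,\ldots]$ of $\alpha_0\in\mathbb{Q}_p$ is obtained by iterating $b_i=s(\alpha_i)$ and $\alpha_{i+1}=1/(\alpha_i-b_i)$ as long as $\alpha_i\neq b_i$; if $\alpha_i=b_i$ the expansion stops. The $b_i$ are the partial quotients. *)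

theory Defs
  imports Complex_Main "HOL-Computational_Algebra.Primes"
begin

definition pval :: "nat \<Rightarrow> rat \<Rightarrow> int" where
  "pval p q = (case quotient_of q of (a, b) \<Rightarrow>
       int (multiplicity (int p) a) - int (multiplicity (int p) b))"

definition pabs :: "nat \<Rightarrow> rat \<Rightarrow> real" where
  "pabs p q = (if q = 0 then 0 else real p powi (- pval p q))"

text \<open>Elements of Q_p are represented by p-adic Cauchy sequences of rationals
  (Q_p = completion of Q w.r.t. the p-adic absolute value).\<close>
definition padic_cauchy :: "nat \<Rightarrow> (nat \<Rightarrow> rat) \<Rightarrow> bool" where
  "padic_cauchy p X \<longleftrightarrow>
     (\<forall>e>0. \<exists>N. \<forall>m\<ge>N. \<forall>n\<ge>N. pabs p (X m - X n) < e)"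

definition padic_eq :: "nat \<Rightarrow> (nat \<Rightarrow> rat) \<Rightarrow> (nat \<Rightarrow> rat) \<Rightarrow> bool" where
  "padic_eq p X Y \<longleftrightarrow> (\<lambda>k. pabs p (X k - Y k)) \<longlonglongrightarrow> 0"

definition padic_abs :: "nat \<Rightarrow> (nat \<Rightarrow> rat) \<Rightarrow> real" where
  "padic_abs p X = lim (\<lambda>k. pabs p (X k))"

definition padic_inv :: "(nat \<Rightarrow> rat) \<Rightarrow> (nat \<Rightarrow> rat)" where
  "padic_inv X = (\<lambda>k. inverse (X k))"

definition browkin_S :: "nat \<Rightarrow> rat set" where
  "browkin_S p = {y. \<exists>(N::nat) (a::nat \<Rightarrow> int).
      (\<forall>i\<le>N. 2 * \<bar>a i\<bar> \<le> int p - 1) \<and>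
      y = (\<Sum>i\<le>N. of_int (a i) / of_nat p ^ i)}"

text \<open>Browkin's function s: the (unique) element of browkin_S p with
  |x - s(x)|_p < 1, i.e. the truncation of the balanced expansion of x at p^0.\<close>
definition browkin_s :: "nat \<Rightarrow> (nat \<Rightarrow> rat) \<Rightarrow> rat" where
  "browkin_s p X = (THE y. y \<in> browkin_S p \<and> padic_abs p (\<lambda>k. X k - y) < 1)"

text \<open>The complete quotients alpha_i (None once the expansion has stopped).\<close>
fun cf_state :: "nat \<Rightarrow> (nat \<Rightarrow> rat) \<Rightarrow> nat \<Rightarrow> (nat \<Rightarrow> rat) option" where
  "cf_state p X 0 = Some X"
| "cf_state p X (Suc i) = (case cf_state p X i of
      None \<Rightarrow> None
    | Some A \<Rightarrow> if padic_eq p A (\<lambda>_. browkin_s p A) then None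
                else Some (padic_inv (\<lambda>k. A k - browkin_s p A)))"

definition browkin_pq :: "nat \<Rightarrow> (nat \<Rightarrow> rat) \<Rightarrow> nat \<Rightarrow> rat option" where
  "browkin_pq p X i = map_option (browkin_s p) (cf_state p X i)"

text \<open>Bq b (i+2) = B_i, with B_{-2} = 1, B_{-1} = 0, B_i = b_i B_{i-1} + B_{i-2}.\<close>
fun Bq :: "(nat \<Rightarrow> rat) \<Rightarrow> nat \<Rightarrow> rat" where
  "Bq b 0 = 1"
| "Bq b (Suc 0) = 0"
| "Bq b (Suc (Suc i)) = b i * Bq b (Suc i) + Bq b i"

end

theory Submission
  imports Defs
begin

lemma pval_frac:
  assumes p: "prime p" and a: "a \<noteq> 0" and b: "b \<noteq> 0"
  shows "pval p (of_int a / of_int b) = int (multiplicity (int p) a) - int (multiplicity (int p) b)"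
proof -
  obtain a' b' where q: "quotient_of (of_int a / of_int b) = (a', b')" by (cases "quotient_of (of_int a / of_int b)")
  have e: "(of_int a / of_int b :: rat) = of_int a' / of_int b'" using quotient_of_div[OF q] .
  have b'0: "b' > 0" using quotient_of_denom_pos[OF q] .
  have a'0: "a' \<noteq> 0" using e a b by auto
  have "(of_int (a * b') :: rat) = of_int (a' * b)" using e b b'0 by (simp add: field_simps)
  hence eq: "a * b' = a' * b" by linarith
  have pe: "prime_elem (int p)" using p by simp
  have "multiplicity (int p) (a * b') = multiplicity (int p) (a' * b)" using eq by simp
  hence "multiplicity (int p) a + multiplicity (int p) b' = multiplicity (int p) a' + multiplicity (int p) b"
    using prime_elem_multiplicity_mult_distrib[OF pe] a b a'0 b'0 by simp
  thus ?thesis unfolding pval_def q by simp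
qed

lemma rat_frac: fixes x :: rat obtains a b :: int where "x = of_int a / of_int b" "b \<noteq> 0"
proof -
  obtain a b where q: "quotient_of x = (a, b)" by (cases "quotient_of x")
  show ?thesis using that quotient_of_div[OF q] quotient_of_denom_pos[OF q] by auto
qed

lemma pabs_def2: "x \<noteq> 0 \<Longrightarrow> pabs p x = real p powi (- pval p x)"
  by (simp add: pabs_def)

lemma pabs_nonneg: "prime p \<Longrightarrow> pabs p x \<ge> 0"
  by (simp add: pabs_def)

lemma pabs_pos: "prime p \<Longrightarrow> x \<noteq> 0 \<Longrightarrow> pabs p x > 0"
  using prime_gt_0_nat by (simp add: pabs_def)

lemma pabs_0[simp]: "pabs p 0 = 0" by (simp add: pabs_def)

lemma pabs_eq0: "prime p \<Longrightarrow> pabs p x = 0 \<longleftrightarrow> x = 0"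
  using pabs_pos[of p x] by fastforce

lemma pval_mult:
  assumes p: "prime p" and x: "x \<noteq> 0" and y: "y \<noteq> 0"
  shows "pval p (x * y) = pval p x + pval p y"
proof -
  obtain a b where ab: "x = of_int a / of_int b" "b \<noteq> 0" by (rule rat_frac)
  obtain c d where cd: "y = of_int c / of_int d" "d \<noteq> 0" by (rule rat_frac)
  have a: "a \<noteq> 0" using ab x by auto
  have c: "c \<noteq> 0" using cd y by auto
  have e: "x * y = of_int (a*c) / of_int (b*d)" using ab cd by simp
  have pe: "prime_elem (int p)" using p by simp
  show ?thesis unfolding e using pval_frac[OF p, of "a*c" "b*d"] pval_frac[OF p, of a b] pval_frac[OF p, of c d] ab cd a c
    prime_elem_multiplicity_mult_distrib[OF pe] by (simp del: of_int_mult)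
qed

lemma pabs_mult:
  assumes p: "prime p" shows "pabs p (x * y) = pabs p x * pabs p y"
proof (cases "x = 0 \<or> y = 0")
  case True thus ?thesis by auto
next
  case False
  have "real p \<noteq> 0" using p prime_gt_0_nat by simp
  hence "real p powi (- pval p x + - pval p y) = real p powi (- pval p x) * real p powi (- pval p y)"
    using power_int_add by blast
  thus ?thesis using False pval_mult[OF p, of x y] by (simp add: pabs_def)
qed

lemma pabs_inverse:
  assumes p: "prime p" shows "pabs p (inverse x) = inverse (pabs p x)"
proof (cases "x = 0")
  case True thus ?thesis by simp
next
  case False
  have "pabs p (x * inverse x) = 1" using False by (simp add: pabs_def pval_def)
  hence "pabs p x * pabs p (inverse x) = 1" using pabs_mult[OF p, of x "inverse x"] by simp
  thus ?thesis using inverse_unique by metis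
qed

lemma pabs_minus1: assumes p: "prime p" shows "pabs p (-1) = 1"
proof -
  have "pabs p (-1) * pabs p (-1) = 1" using pabs_mult[OF p, of "-1" "-1"] by (simp add: pabs_def pval_def)
  moreover have "pabs p (-1) \<ge> 0" using pabs_nonneg[OF p] .
  ultimately show ?thesis by (metis abs_of_nonneg abs_one power2_eq_square real_sqrt_abs real_sqrt_one)
qed

lemma pabs_uminus: assumes p: "prime p" shows "pabs p (- x) = pabs p x"
  using pabs_mult[OF p, of "-1" x] pabs_minus1[OF p] by simp

lemma pabs_minus_commute: assumes p: "prime p" shows "pabs p (x - y) = pabs p (y - x)"
  using pabs_uminus[OF p, of "x - y"] by simp

lemma pval_add:
  assumes p: "prime p" and x: "x \<noteq> 0" and y: "y \<noteq> 0" and s: "x + y \<noteq> 0"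
  shows "pval p (x + y) \<ge> min (pval p x) (pval p y)"
proof -
  obtain a b where ab: "x = of_int a / of_int b" "b \<noteq> 0" by (rule rat_frac)
  obtain c d where cd: "y = of_int c / of_int d" "d \<noteq> 0" by (rule rat_frac)
  have a: "a \<noteq> 0" using ab x by auto
  have c: "c \<noteq> 0" using cd y by auto
  have pe: "prime_elem (int p)" using p by simp
  have xe: "x = of_int (a*d) / of_int (b*d)" using ab cd by simp
  have ye: "y = of_int (c*b) / of_int (b*d)" using ab cd by simp
  have se: "x + y = of_int (a*d + c*b) / of_int (b*d)" using ab cd by (simp add: field_simps)
  have n0: "a*d + c*b \<noteq> 0"
  proof
    assume "a*d + c*b = 0"
    hence "x + y = 0" using se by (simp del: of_int_mult of_int_add)
    with s show False ..
  qed
  define k where "k = min (multiplicity (int p) (a*d)) (multiplicity (int p) (c*b))"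
  have "int p ^ k dvd a*d" unfolding k_def by (rule multiplicity_dvd') simp
  moreover have "int p ^ k dvd c*b" unfolding k_def by (rule multiplicity_dvd') simp
  ultimately have "int p ^ k dvd a*d + c*b" by simp
  hence "k \<le> multiplicity (int p) (a*d + c*b)"
    using multiplicity_geI[of "a*d+c*b" "int p"] n0 pe prime_elem_not_unit by blast
  thus ?thesis using pval_frac[OF p] xe ye se a c ab(2) cd(2) n0 unfolding k_def
    by (simp del: of_int_mult of_int_add)
qed

lemma powi_mono_exp: assumes "real p \<ge> 1" "i \<le> j" shows "real p powi i \<le> real p powi j"
  using assms power_int_increasing by blast

lemma pabs_add:
  assumes p: "prime p" shows "pabs p (x + y) \<le> max (pabs p x) (pabs p y)"
proof (cases "x = 0 \<or> y = 0 \<or> x + y = 0")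
  case True thus ?thesis by (auto simp: le_max_iff_disj pabs_nonneg[OF p])
next
  case False
  have p1: "real p \<ge> 1" using p prime_gt_1_nat[of p] by simp
  have "pval p (x + y) \<ge> min (pval p x) (pval p y)" using pval_add[OF p] False by blast
  hence "- pval p (x + y) \<le> - pval p x \<or> - pval p (x + y) \<le> - pval p y" by linarith
  thus ?thesis using False powi_mono_exp[OF p1] unfolding pabs_def
    by (smt (verit) le_max_iff_disj)
qed

lemma pabs_add_strict:
  assumes p: "prime p" and lt: "pabs p x < pabs p y" shows "pabs p (x + y) = pabs p y"
proof -
  have 1: "pabs p (x + y) \<le> pabs p y" using pabs_add[OF p, of x y] lt by simp
  have "pabs p y \<le> max (pabs p (x + y)) (pabs p (- x))" using pabs_add[OF p, of "x+y" "-x"] by simp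
  thus ?thesis using 1 lt pabs_uminus[OF p, of x] by auto
qed

lemma pabs_diff: assumes p: "prime p" shows "pabs p (x - z) \<le> max (pabs p (x - y)) (pabs p (y - z))"
  using pabs_add[OF p, of "x - y" "y - z"] by simp

lemma pabs_lt1:
  assumes p: "prime p" and lt: "pabs p x < 1" shows "pabs p x \<le> 1 / real p"
proof (cases "x = 0")
  case True thus ?thesis by simp
next
  case False
  have p1: "real p > 1" using p prime_gt_1_nat by simp
  have "real p powi (- pval p x) < 1" using lt False by (simp add: pabs_def)
  hence "- pval p x < 0" using p1 one_le_power_int[of "real p" "- pval p x"] by linarith
  hence "real p powi (- pval p x) \<le> real p powi (-1)" using p1 by (intro power_int_increasing) auto
  thus ?thesis using False by (simp add: pabs_def power_int_minus divide_inverse)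
qed


definition Tsum :: "nat \<Rightarrow> (nat \<Rightarrow> int) \<Rightarrow> nat \<Rightarrow> int" where
  "Tsum p a N = (\<Sum>i\<le>N. a i * int p ^ (N - i))"

lemma Tsum_0: "Tsum p a 0 = a 0" by (simp add: Tsum_def)

lemma Tsum_Suc: "Tsum p a (Suc N) = int p * Tsum p a N + a (Suc N)"
proof -
  have "Tsum p a (Suc N) = (\<Sum>i\<le>N. a i * int p ^ (Suc N - i)) + a (Suc N)"
    by (simp add: Tsum_def)
  also have "(\<Sum>i\<le>N. a i * int p ^ (Suc N - i)) = (\<Sum>i\<le>N. int p * (a i * int p ^ (N - i)))"
    by (rule sum.cong) (auto simp: Suc_diff_le)
  also have "\<dots> = int p * Tsum p a N" by (simp add: Tsum_def sum_distrib_left)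
  finally show ?thesis .
qed

lemma Tsum_cong: "(\<And>i. i \<le> N \<Longrightarrow> a i = b i) \<Longrightarrow> Tsum p a N = Tsum p b N"
  unfolding Tsum_def by (rule sum.cong) auto

lemma Tsum_rat:
  assumes p: "p > 0"
  shows "(of_int (Tsum p a N) :: rat) / of_nat p ^ N = (\<Sum>i\<le>N. of_int (a i) / of_nat p ^ i)"
proof -
  have "(\<Sum>i\<le>N. of_int (a i) / of_nat p ^ i) * of_nat p ^ N = (\<Sum>i\<le>N. of_int (a i) * (of_nat p ^ N / of_nat p ^ i) :: rat)"
    by (simp add: sum_distrib_right)
  also have "\<dots> = (\<Sum>i\<le>N. of_int (a i) * of_nat p ^ (N - i))"
    by (rule sum.cong) (use p in \<open>auto simp: power_diff\<close>)
  also have "\<dots> = of_int (Tsum p a N)" by (simp add: Tsum_def)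
  finally show ?thesis using p by (simp add: field_simps)
qed

lemma balanced_rep:
  assumes p: "prime p" and o: "odd p"
  shows "\<exists>d. 2 * \<bar>d\<bar> \<le> int p - 1 \<and> int p dvd Y - d"
proof -
  define r where "r = Y mod int p"
  have pp: "int p > 0" using p prime_gt_0_nat by simp
  have r0: "0 \<le> r" "r < int p" using pp unfolding r_def by auto
  have dv: "int p dvd Y - r" unfolding r_def by (simp add: mod_0_imp_dvd minus_mod_eq_mult_div)
  show ?thesis
  proof (cases "2 * r \<le> int p - 1")
    case True thus ?thesis using r0 dv by (intro exI[of _ r]) auto
  next
    case False
    have "2 * r \<noteq> int p"
    proof
      assume "2 * r = int p"
      hence "even (int p)" by (metis dvd_triv_left)
      thus False using o by simp
    qed
    hence "2 * r \<ge> int p + 1" using False by linarith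
    moreover have "2 * \<bar>r - int p\<bar> = 2 * int p - 2 * r" using r0 by simp
    ultimately have 1: "2 * \<bar>r - int p\<bar> \<le> int p - 1" by linarith
    have "int p dvd (Y - r) + int p" using dv by (intro dvd_add) auto
    moreover have "(Y - r) + int p = Y - (r - int p)" by simp
    ultimately have 2: "int p dvd Y - (r - int p)" by simp
    show ?thesis using 1 2 by (intro exI[of _ "r - int p"]) simp
  qed
qed

lemma balanced_digits:
  assumes p: "prime p" and o: "odd p"
  shows "\<exists>a. (\<forall>i\<le>N. 2 * \<bar>a i\<bar> \<le> int p - 1) \<and> int p ^ Suc N dvd Y - Tsum p a N"
proof (induction N arbitrary: Y)
  case 0
  obtain d where d: "2 * \<bar>d\<bar> \<le> int p - 1" "int p dvd Y - d" using balanced_rep[OF p o] by blast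
  show ?case by (rule exI[of _ "\<lambda>_. d"]) (use d in \<open>simp add: Tsum_0\<close>)
next
  case (Suc N)
  obtain d where d: "2 * \<bar>d\<bar> \<le> int p - 1" "int p dvd Y - d" using balanced_rep[OF p o] by blast
  obtain Y' where Y': "Y - d = int p * Y'" using d(2) by blast
  obtain a where a: "\<forall>i\<le>N. 2 * \<bar>a i\<bar> \<le> int p - 1" "int p ^ Suc N dvd Y' - Tsum p a N"
    using Suc.IH by blast
  define a' where "a' = a(Suc N := d)"
  have T: "Tsum p a' (Suc N) = int p * Tsum p a N + d"
    unfolding Tsum_Suc using Tsum_cong[of N a' a p] by (simp add: a'_def)
  have "Y - Tsum p a' (Suc N) = int p * (Y' - Tsum p a N)" using T Y' by (simp add: algebra_simps)
  hence "int p ^ Suc (Suc N) dvd Y - Tsum p a' (Suc N)" using a(2) by (simp add: mult_dvd_mono)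
  moreover have "\<forall>i\<le>Suc N. 2 * \<bar>a' i\<bar> \<le> int p - 1" using a(1) d(1) by (auto simp: a'_def le_Suc_eq)
  ultimately show ?case by blast
qed

lemma pabs_lt1_iff:
  assumes p: "prime p" and x: "x \<noteq> 0"
  shows "pabs p x < 1 \<longleftrightarrow> pval p x > 0"
proof -
  have p1: "real p > 1" using p prime_gt_1_nat[of p] by simp
  have "real p powi (- pval p x) < 1 \<longleftrightarrow> - pval p x < 0"
  proof
    assume "real p powi (- pval p x) < 1"
    thus "- pval p x < 0" using p1 one_le_power_int[of "real p" "- pval p x"] by linarith
  next
    assume "- pval p x < 0"
    thus "real p powi (- pval p x) < 1" using p1 power_int_strict_increasing[of "- pval p x" 0 "real p"] by simp
  qed
  thus ?thesis using x by (simp add: pabs_def)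
qed

lemma browkin_S_exists:
  assumes p: "prime p" and o: "odd p"
  shows "\<exists>y\<in>browkin_S p. pabs p (x - y) < 1"
proof -
  obtain u v where uv: "x = of_int u / of_int v" "v \<noteq> 0" by (rule rat_frac)
  define N where "N = multiplicity (int p) v"
  have pe: "prime_elem (int p)" using p by simp
  obtain w where w: "v = int p ^ N * w" "\<not> int p dvd w"
    using multiplicity_decompose'[of v "int p"] uv(2) pe prime_elem_not_unit unfolding N_def by blast
  have w0: "w \<noteq> 0" using w uv by auto
  have "coprime (int p) w" using prime_imp_coprime[of "int p" w] p w by simp
  hence "coprime w (int p ^ Suc N)" by (simp add: coprime_commute)
  then obtain s t where st: "s * w + t * int p ^ Suc N = 1" using bezout_int[of w "int p ^ Suc N"] by auto
  obtain a where a: "\<forall>i\<le>N. 2 * \<bar>a i\<bar> \<le> int p - 1" "int p ^ Suc N dvd s * u - Tsum p a N"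
    using balanced_digits[OF p o] by blast
  define T where "T = Tsum p a N"
  have "u - w * T = u * t * int p ^ Suc N + w * (s * u - T)"
  proof -
    have "u = u * (s * w + t * int p ^ Suc N)" using st by simp
    thus ?thesis by (simp add: algebra_simps)
  qed
  hence dv: "int p ^ Suc N dvd u - w * T" using a(2) unfolding T_def by simp
  define y where "y = (of_int T :: rat) / of_nat p ^ N"
  have pp: "p > 0" using p prime_gt_0_nat by simp
  have yS: "y \<in> browkin_S p" unfolding browkin_S_def y_def T_def using a(1) Tsum_rat[OF pp] by blast
  have xy: "x - y = of_int (u - w * T) / of_int (int p ^ N * w)"
    using uv w w0 pp unfolding y_def by (simp add: field_simps)
  show ?thesis
  proof (cases "u - w * T = 0")
    case True thus ?thesis using xy yS by (intro bexI[of _ y]) auto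
  next
    case False
    have m1: "multiplicity (int p) (u - w * T) \<ge> Suc N"
      using multiplicity_geI[OF False _ dv] pe prime_elem_not_unit by blast
    have m2: "multiplicity (int p) (int p ^ N * w) = N"
      using prime_elem_multiplicity_mult_distrib[OF pe, of "int p ^ N" w] w0 pp
        not_dvd_imp_multiplicity_0[OF w(2)] pe by simp
    have "pval p (x - y) = int (multiplicity (int p) (u - w * T)) - int (multiplicity (int p) (int p ^ N * w))"
      unfolding xy by (rule pval_frac[OF p False]) (use w0 pp in simp)
    hence "pval p (x - y) > 0" using m1 m2 by simp
    moreover have "x - y \<noteq> 0"
    proof -
      have h1: "(of_int (u - w * T)::rat) \<noteq> 0" using False by (simp only: of_int_eq_0_iff not_False_eq_True)
      have h2: "(of_int (int p ^ N * w)::rat) \<noteq> 0" using w0 pp by simp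
      show ?thesis unfolding xy using h1 h2 divide_eq_0_iff by blast
    qed
    ultimately show ?thesis using pabs_lt1_iff[OF p] yS by blast
  qed
qed

lemma browkin_S_extend:
  assumes y: "y \<in> browkin_S p"
  shows "\<exists>N0. \<forall>N\<ge>N0. \<exists>a. (\<forall>i\<le>N. 2 * \<bar>a i\<bar> \<le> int p - 1) \<and> y = (\<Sum>i\<le>N. of_int (a i) / of_nat p ^ i)"
proof -
  obtain N0 a where a: "\<forall>i\<le>N0. 2 * \<bar>a i\<bar> \<le> int p - 1" "y = (\<Sum>i\<le>N0. of_int (a i) / of_nat p ^ i)"
    using y unfolding browkin_S_def by blast
  have "\<exists>a. (\<forall>i\<le>N. 2 * \<bar>a i\<bar> \<le> int p - 1) \<and> y = (\<Sum>i\<le>N. of_int (a i) / of_nat p ^ i)" if N: "N \<ge> N0" for N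
  proof -
    define a' where "a' i = (if i \<le> N0 then a i else 0)" for i
    have "(\<Sum>i\<le>N. of_int (a' i) / of_nat p ^ i) = (\<Sum>i\<le>N0. of_int (a' i) / (of_nat p ^ i :: rat))"
      by (rule sum.mono_neutral_right) (use N in \<open>auto simp: a'_def\<close>)
    also have "\<dots> = y" unfolding a(2) by (rule sum.cong) (auto simp: a'_def)
    finally show ?thesis using a(1) by (intro exI[of _ a']) (auto simp: a'_def)
  qed
  thus ?thesis by blast
qed

lemma Tsum_bound:
  assumes "\<forall>i\<le>N. \<bar>c i\<bar> \<le> int p - 1"
  shows "\<bar>Tsum p c N\<bar> \<le> int p ^ Suc N - 1"
  using assms
proof (induction N)
  case 0 thus ?case by (simp add: Tsum_0)
next
  case (Suc N)
  have ih: "\<bar>Tsum p c N\<bar> \<le> int p ^ Suc N - 1" using Suc by simp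
  have c: "\<bar>c (Suc N)\<bar> \<le> int p - 1" using Suc.prems by simp
  have "\<bar>Tsum p c (Suc N)\<bar> \<le> int p * \<bar>Tsum p c N\<bar> + \<bar>c (Suc N)\<bar>"
    unfolding Tsum_Suc by (simp add: abs_mult abs_triangle_ineq order_trans[OF abs_triangle_ineq])
  also have "\<dots> \<le> int p * (int p ^ Suc N - 1) + (int p - 1)"
    using ih c by (intro add_mono mult_left_mono) auto
  also have "\<dots> = int p ^ Suc (Suc N) - 1" by (simp add: algebra_simps)
  finally show ?case .
qed

lemma browkin_S_unique:
  assumes p: "prime p" and y1: "y1 \<in> browkin_S p" and y2: "y2 \<in> browkin_S p"
    and lt: "pabs p (y1 - y2) < 1"
  shows "y1 = y2"
proof -
  obtain N1 where N1: "\<forall>N\<ge>N1. \<exists>a. (\<forall>i\<le>N. 2 * \<bar>a i\<bar> \<le> int p - 1) \<and> y1 = (\<Sum>i\<le>N. of_int (a i) / of_nat p ^ i)"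
    using browkin_S_extend[OF y1] by blast
  obtain N2 where N2: "\<forall>N\<ge>N2. \<exists>a. (\<forall>i\<le>N. 2 * \<bar>a i\<bar> \<le> int p - 1) \<and> y2 = (\<Sum>i\<le>N. of_int (a i) / of_nat p ^ i)"
    using browkin_S_extend[OF y2] by blast
  define N where "N = max N1 N2"
  obtain a1 where a1: "\<forall>i\<le>N. 2 * \<bar>a1 i\<bar> \<le> int p - 1" "y1 = (\<Sum>i\<le>N. of_int (a1 i) / of_nat p ^ i)"
    using N1 max.cobounded1[of N1 N2] unfolding N_def by blast
  obtain a2 where a2: "\<forall>i\<le>N. 2 * \<bar>a2 i\<bar> \<le> int p - 1" "y2 = (\<Sum>i\<le>N. of_int (a2 i) / of_nat p ^ i)"
    using N2 max.cobounded2[of N2 N1] unfolding N_def by blast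
  define c where "c i = a1 i - a2 i" for i
  have pp: "p > 0" using p prime_gt_0_nat by simp
  have cb: "\<forall>i\<le>N. \<bar>c i\<bar> \<le> int p - 1" using a1(1) a2(1) unfolding c_def by force
  have "y1 - y2 = (\<Sum>i\<le>N. of_int (c i) / of_nat p ^ i)"
    unfolding a1(2) a2(2) c_def by (simp add: sum_subtractf diff_divide_distrib)
  hence e: "y1 - y2 = of_int (Tsum p c N) / of_int (int p ^ N)" using Tsum_rat[OF pp, of c N] by simp
  show ?thesis
  proof (rule ccontr)
    assume ne: "y1 \<noteq> y2"
    hence I0: "Tsum p c N \<noteq> 0" using e by auto
    have pe: "prime_elem (int p)" using p by simp
    have "pval p (y1 - y2) > 0" using pabs_lt1_iff[OF p] ne lt by simp
    hence "int (multiplicity (int p) (Tsum p c N)) - int N > 0"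
      using pval_frac[OF p I0, of "int p ^ N"] e pp pe by simp
    hence "Suc N \<le> multiplicity (int p) (Tsum p c N)" by simp
    hence "int p ^ Suc N dvd Tsum p c N" by (rule multiplicity_dvd')
    hence "\<bar>int p ^ Suc N\<bar> \<le> \<bar>Tsum p c N\<bar>" using I0 by (intro dvd_imp_le_int)
    hence "int p ^ Suc N \<le> \<bar>Tsum p c N\<bar>" by simp
    with Tsum_bound[OF cb] show False by simp
  qed
qed


lemma cauchy_shift: "padic_cauchy p X \<Longrightarrow> padic_cauchy p (\<lambda>k. X k - c)"
  unfolding padic_cauchy_def by simp

lemma cauchy_diff:
  assumes p: "prime p" and X: "padic_cauchy p X" and Y: "padic_cauchy p Y"
  shows "padic_cauchy p (\<lambda>k. X k - Y k)"
  unfolding padic_cauchy_def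
proof (intro allI impI)
  fix e :: real assume e: "e > 0"
  obtain N1 where N1: "\<forall>m\<ge>N1. \<forall>n\<ge>N1. pabs p (X m - X n) < e" using X e unfolding padic_cauchy_def by blast
  obtain N2 where N2: "\<forall>m\<ge>N2. \<forall>n\<ge>N2. pabs p (Y m - Y n) < e" using Y e unfolding padic_cauchy_def by blast
  have "pabs p ((X m - Y m) - (X n - Y n)) < e" if "m \<ge> max N1 N2" "n \<ge> max N1 N2" for m n
  proof -
    have eq: "(X m - Y m) - (X n - Y n) = (X m - X n) + (- (Y m - Y n))" by simp
    have "pabs p ((X m - Y m) - (X n - Y n)) \<le> max (pabs p (X m - X n)) (pabs p (- (Y m - Y n)))"
      unfolding eq by (rule pabs_add[OF p])
    moreover have "pabs p (X m - X n) < e" using N1 that by simp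
    moreover have "pabs p (Y m - Y n) < e" using N2 that by simp
    ultimately show ?thesis using pabs_uminus[OF p, of "Y m - Y n"] by simp
  qed
  thus "\<exists>N. \<forall>m\<ge>N. \<forall>n\<ge>N. pabs p (X m - Y m - (X n - Y n)) < e" by blast
qed

lemma cauchy_const_abs:
  assumes p: "prime p" and X: "padic_cauchy p X" and nz: "\<not> (\<lambda>k. pabs p (X k)) \<longlonglongrightarrow> 0"
  shows "\<exists>c>0. \<exists>N. \<forall>k\<ge>N. pabs p (X k) = c"
proof -
  obtain e where e: "e > 0" "\<forall>N. \<exists>k\<ge>N. \<not> pabs p (X k) < e"
    using nz pabs_nonneg[OF p] unfolding LIMSEQ_iff by (auto simp: abs_of_nonneg)
  obtain N where N: "\<forall>m\<ge>N. \<forall>n\<ge>N. pabs p (X m - X n) < e" using X e unfolding padic_cauchy_def by blast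
  obtain k0 where k0: "k0 \<ge> N" "pabs p (X k0) \<ge> e" using e(2) not_less by blast
  have "pabs p (X m) = pabs p (X k0)" if m: "m \<ge> N" for m
  proof -
    have "pabs p (X m - X k0) < e" using N m k0(1) by blast
    hence "pabs p (X m - X k0) < pabs p (X k0)" using k0(2) by linarith
    hence "pabs p ((X m - X k0) + X k0) = pabs p (X k0)" by (rule pabs_add_strict[OF p])
    thus ?thesis by simp
  qed
  moreover have "pabs p (X k0) > 0" using k0 e by simp
  ultimately show ?thesis by blast
qed

lemma cauchy_lim:
  assumes p: "prime p" and X: "padic_cauchy p X"
  shows "(\<lambda>k. pabs p (X k)) \<longlonglongrightarrow> padic_abs p X"
proof -
  have "convergent (\<lambda>k. pabs p (X k))"
  proof (cases "(\<lambda>k. pabs p (X k)) \<longlonglongrightarrow> 0")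
    case True thus ?thesis by (auto simp: convergent_def)
  next
    case False
    then obtain c N where cN: "\<forall>k\<ge>N. pabs p (X k) = c" using cauchy_const_abs[OF p X] by blast
    have "(\<lambda>k. pabs p (X k)) \<longlonglongrightarrow> c"
      by (rule tendsto_eventually) (use cN in \<open>auto simp: eventually_sequentially\<close>)
    thus ?thesis by (auto simp: convergent_def)
  qed
  thus ?thesis unfolding padic_abs_def by (simp add: convergent_LIMSEQ_iff)
qed

lemma cauchy_eventually_nz:
  assumes p: "prime p" and X: "padic_cauchy p X" and nz: "\<not> (\<lambda>k. pabs p (X k)) \<longlonglongrightarrow> 0"
  shows "eventually (\<lambda>k. X k \<noteq> 0) sequentially"
proof -
  obtain c N where cN: "c > 0" "\<forall>k\<ge>N. pabs p (X k) = c" using cauchy_const_abs[OF p X nz] by blast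
  show ?thesis unfolding eventually_sequentially using cN by (intro exI[of _ N]) auto
qed

lemma cauchy_inv:
  assumes p: "prime p" and X: "padic_cauchy p X" and nz: "\<not> (\<lambda>k. pabs p (X k)) \<longlonglongrightarrow> 0"
  shows "padic_cauchy p (padic_inv X)"
  unfolding padic_cauchy_def padic_inv_def
proof (intro allI impI)
  fix e :: real assume e: "e > 0"
  obtain c N where cN: "c > 0" "\<forall>k\<ge>N. pabs p (X k) = c" using cauchy_const_abs[OF p X nz] by blast
  have ecc: "e * c * c > 0" using e cN(1) by simp
  obtain N1 where N1: "\<forall>m\<ge>N1. \<forall>n\<ge>N1. pabs p (X m - X n) < e * c * c"
    using X ecc unfolding padic_cauchy_def by blast
  have "pabs p (inverse (X m) - inverse (X n)) < e" if "m \<ge> max N N1" "n \<ge> max N N1" for m n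
  proof -
    have cm: "pabs p (X m) = c" and cn: "pabs p (X n) = c" using cN that by auto
    hence nz: "X m \<noteq> 0" "X n \<noteq> 0" using cN(1) by auto
    have "inverse (X m) - inverse (X n) = (X n - X m) * inverse (X m) * inverse (X n)"
      using nz by (simp add: field_simps)
    hence "pabs p (inverse (X m) - inverse (X n)) = pabs p (X n - X m) * inverse c * inverse c"
      using cm cn by (simp add: pabs_mult[OF p] pabs_inverse[OF p])
    moreover have "pabs p (X n - X m) < e * c * c" using N1 that by auto
    ultimately have "pabs p (inverse (X m) - inverse (X n)) * (c * c) < e * (c * c)"
      using cN(1) by (simp add: field_simps)
    thus ?thesis using cN(1) mult_less_cancel_right_pos[of "c * c"] by simp
  qed
  thus "\<exists>N. \<forall>m\<ge>N. \<forall>n\<ge>N. pabs p (inverse (X m) - inverse (X n)) < e" by blast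
qed

lemma browkin_s_prop:
  assumes p: "prime p" and o: "odd p" and X: "padic_cauchy p X"
  shows "browkin_s p X \<in> browkin_S p \<and> padic_abs p (\<lambda>k. X k - browkin_s p X) < 1"
proof -
  have ex: "\<exists>y. y \<in> browkin_S p \<and> padic_abs p (\<lambda>k. X k - y) < 1"
  proof -
    have "(1::real) > 0" by simp
    then obtain N0 where N0: "\<forall>m\<ge>N0. \<forall>n\<ge>N0. pabs p (X m - X n) < 1" using X unfolding padic_cauchy_def by blast
    obtain y where y: "y \<in> browkin_S p" "pabs p (X N0 - y) < 1" using browkin_S_exists[OF p o] by blast
    have "pabs p (X m - y) \<le> 1 / real p" if "m \<ge> N0" for m
    proof -
      have "pabs p (X m - y) \<le> max (pabs p (X m - X N0)) (pabs p (X N0 - y))" by (rule pabs_diff[OF p])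
      moreover have "pabs p (X m - X N0) < 1" using N0 that by blast
      ultimately have "pabs p (X m - y) < 1" using y(2) by linarith
      thus ?thesis by (rule pabs_lt1[OF p])
    qed
    hence "padic_abs p (\<lambda>k. X k - y) \<le> 1 / real p"
      using cauchy_lim[OF p cauchy_shift[OF X, of y]] by (intro LIMSEQ_le_const2) auto
    moreover have "1 / real p < 1" using p prime_gt_1_nat[of p] by simp
    ultimately show ?thesis using y(1) by fastforce
  qed
  have un: "y1 = y2" if "y1 \<in> browkin_S p \<and> padic_abs p (\<lambda>k. X k - y1) < 1"
      "y2 \<in> browkin_S p \<and> padic_abs p (\<lambda>k. X k - y2) < 1" for y1 y2
  proof -
    have "eventually (\<lambda>k. pabs p (X k - y1) < 1) sequentially"
      using order_tendstoD(2)[OF cauchy_lim[OF p cauchy_shift[OF X, of y1]]] that(1) by blast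
    moreover have "eventually (\<lambda>k. pabs p (X k - y2) < 1) sequentially"
      using order_tendstoD(2)[OF cauchy_lim[OF p cauchy_shift[OF X, of y2]]] that(2) by blast
    ultimately have "eventually (\<lambda>k. pabs p (X k - y1) < 1 \<and> pabs p (X k - y2) < 1) sequentially"
      by (rule eventually_conj)
    then obtain k where k: "pabs p (X k - y1) < 1" "pabs p (X k - y2) < 1"
      using eventually_sequentially by auto
    have "pabs p (y1 - y2) \<le> max (pabs p (y1 - X k)) (pabs p (X k - y2))" by (rule pabs_diff[OF p])
    hence "pabs p (y1 - y2) < 1" using k pabs_minus_commute[OF p, of y1 "X k"] by auto
    thus ?thesis using browkin_S_unique[OF p] that by blast
  qed
  have "\<exists>!y. y \<in> browkin_S p \<and> padic_abs p (\<lambda>k. X k - y) < 1" using ex un by blast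
  from theI'[OF this] show ?thesis unfolding browkin_s_def .
qed


lemma pabs_1[simp]: "pabs p 1 = 1" by (simp add: pabs_def pval_def)

lemma rat_cf:
  assumes p: "prime p"
    and xr: "\<forall>i<n. x i \<noteq> b i \<and> x (Suc i) = inverse (x i - b i)"
    and yr: "\<forall>i<n. y i \<noteq> b i \<and> y (Suc i) = inverse (y i - b i)"
    and xs: "\<forall>i\<le>n. pabs p (x i - b i) < 1"
    and ys: "\<forall>i\<le>n. pabs p (y i - b i) < 1"
  shows "pabs p (x 0 - y 0) * (pabs p (Bq b (n + 2)))\<^sup>2 < 1"
proof -
  define P where "P i = (\<Prod>j\<in>{1..i}. pabs p (b j))" for i
  have big: "pabs p (z j) > 1 \<and> pabs p (b j) = pabs p (z j)"
    if zr: "\<forall>i<n. z i \<noteq> b i \<and> z (Suc i) = inverse (z i - b i)"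
      and zs: "\<forall>i\<le>n. pabs p (z i - b i) < 1" and j: "1 \<le> j" "j \<le> n" for z j
  proof -
    obtain i where i: "j = Suc i" using j by (cases j) auto
    have il: "i < n" using i j by simp
    have "pabs p (z j) = inverse (pabs p (z i - b i))" using zr il i by (simp add: pabs_inverse[OF p])
    moreover have "pabs p (z i - b i) > 0" using zr il pabs_pos[OF p] by simp
    moreover have "pabs p (z i - b i) < 1" using zs il by simp
    ultimately have g: "pabs p (z j) > 1" by (simp add: one_less_inverse)
    have "pabs p (b j - z j) < 1" using zs j pabs_minus_commute[OF p, of "b j" "z j"] by simp
    hence "pabs p ((b j - z j) + z j) = pabs p (z j)" using g by (intro pabs_add_strict[OF p]) simp
    thus ?thesis using g by simp
  qed
  have bx: "pabs p (x j) > 1 \<and> pabs p (b j) = pabs p (x j)" if "1 \<le> j" "j \<le> n" for j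
    using big[OF xr xs that] .
  have by': "pabs p (y j) > 1 \<and> pabs p (b j) = pabs p (y j)" if "1 \<le> j" "j \<le> n" for j
    using big[OF yr ys that] .
  have P1: "P i \<ge> 1" if "i \<le> n" for i
    unfolding P_def using bx that by (intro prod_ge_1) (auto intro: less_imp_le)
  have PS: "P (Suc i) = P i * pabs p (b (Suc i))" for i
    unfolding P_def by (simp add: prod.cl_ivl_Suc)
  have B: "pabs p (Bq b (Suc (Suc i))) = P i \<and> pabs p (Bq b (Suc i)) < P i" if "i \<le> n" for i
    using that
  proof (induction i)
    case 0 thus ?case by (simp add: P_def)
  next
    case (Suc i)
    have ih: "pabs p (Bq b (Suc (Suc i))) = P i" "pabs p (Bq b (Suc i)) < P i" using Suc by auto
    have bb: "pabs p (b (Suc i)) > 1" using bx[of "Suc i"] Suc.prems by simp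
    have Pi: "P i \<ge> 1" using P1 Suc.prems by simp
    have "pabs p (b (Suc i) * Bq b (Suc (Suc i))) = pabs p (b (Suc i)) * P i"
      using ih by (simp add: pabs_mult[OF p])
    moreover have "pabs p (b (Suc i)) * P i > P i" using bb Pi by simp
    ultimately have lt: "pabs p (Bq b (Suc i)) < pabs p (b (Suc i) * Bq b (Suc (Suc i)))" using ih by simp
    have "pabs p (Bq b (Suc (Suc (Suc i)))) = pabs p (Bq b (Suc i) + b (Suc i) * Bq b (Suc (Suc i)))"
      by (simp add: add.commute)
    also have "\<dots> = pabs p (b (Suc i) * Bq b (Suc (Suc i)))" by (rule pabs_add_strict[OF p lt])
    also have "\<dots> = P (Suc i)" using ih PS by (simp add: pabs_mult[OF p] mult.commute)
    finally show ?case using ih PS bb Pi by simp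
  qed
  have Dl: "pabs p (x 0 - y 0) * (P i)\<^sup>2 = pabs p (x i - y i)" if "i \<le> n" for i
    using that
  proof (induction i)
    case 0 thus ?case by (simp add: P_def)
  next
    case (Suc i)
    have il: "i < n" using Suc by simp
    have ih: "pabs p (x 0 - y 0) * (P i)\<^sup>2 = pabs p (x i - y i)" using Suc by simp
    have xi: "x i - b i = inverse (x (Suc i))" and yi: "y i - b i = inverse (y (Suc i))"
      using xr yr il by auto
    have nz: "x (Suc i) \<noteq> 0" "y (Suc i) \<noteq> 0" using xr yr il by auto
    have "x i - y i = (x i - b i) - (y i - b i)" by simp
    also have "\<dots> = (y (Suc i) - x (Suc i)) * inverse (x (Suc i)) * inverse (y (Suc i))"
      unfolding xi yi using nz by (simp add: field_simps)
    finally have "pabs p (x i - y i) = pabs p (x (Suc i) - y (Suc i)) * inverse (pabs p (x (Suc i))) * inverse (pabs p (y (Suc i)))"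
      by (simp add: pabs_mult[OF p] pabs_inverse[OF p] pabs_minus_commute[OF p, of "y (Suc i)"])
    moreover have "pabs p (x (Suc i)) = pabs p (b (Suc i))" "pabs p (y (Suc i)) = pabs p (b (Suc i))"
      using bx[of "Suc i"] by'[of "Suc i"] Suc.prems by auto
    moreover have "pabs p (b (Suc i)) > 0" using bx[of "Suc i"] Suc.prems by simp
    ultimately have "pabs p (x (Suc i) - y (Suc i)) = pabs p (x i - y i) * (pabs p (b (Suc i)))\<^sup>2"
      by (simp add: field_simps power2_eq_square)
    thus ?case using ih PS by (simp add: power_mult_distrib)
  qed
  have "pabs p (x n - y n) \<le> max (pabs p (x n - b n)) (pabs p (b n - y n))" by (rule pabs_diff[OF p])
  moreover have "pabs p (b n - y n) < 1" using ys pabs_minus_commute[OF p, of "b n" "y n"] by simp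
  moreover have "pabs p (x n - b n) < 1" using xs by simp
  ultimately have "pabs p (x n - y n) < 1" by linarith
  moreover have "pabs p (Bq b (n + 2)) = P n" using B[of n] by simp
  ultimately show ?thesis using Dl[of n] by simp
qed


lemma seq_eventually:
  assumes p: "prime p" and o: "odd p" and X: "padic_cauchy p X"
    and H: "\<forall>i\<le>n. browkin_pq p X i = Some (b i)"
  shows "\<exists>A. A 0 = X \<and> eventually (\<lambda>k. (\<forall>i<n. A i k \<noteq> b i \<and> A (Suc i) k = inverse (A i k - b i))
             \<and> (\<forall>i\<le>n. pabs p (A i k - b i) < 1)) sequentially"
proof -
  define A where "A i = the (cf_state p X i)" for i
  have st: "cf_state p X i = Some (A i) \<and> browkin_s p (A i) = b i" if "i \<le> n" for i
  proof -
    have "map_option (browkin_s p) (cf_state p X i) = Some (b i)" using H that unfolding browkin_pq_def by blast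
    thus ?thesis unfolding A_def by (cases "cf_state p X i") auto
  qed
  have A0: "A 0 = X" unfolding A_def by simp
  have rec: "A (Suc i) = padic_inv (\<lambda>k. A i k - b i) \<and> \<not> padic_eq p (A i) (\<lambda>_. b i)" if "i < n" for i
  proof -
    have s1: "cf_state p X i = Some (A i)" "browkin_s p (A i) = b i" using st[of i] that by auto
    have s2: "cf_state p X (Suc i) = Some (A (Suc i))" using st[of "Suc i"] that by auto
    show ?thesis
    proof (cases "padic_eq p (A i) (\<lambda>_. b i)")
      case True thus ?thesis using s1 s2 by simp
    next
      case False thus ?thesis using s1 s2 by simp
    qed
  qed
  have nt: "\<not> (\<lambda>k. pabs p (A i k - b i)) \<longlonglongrightarrow> 0" if "i < n" for i
    using rec[OF that] unfolding padic_eq_def by simp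
  have cau: "padic_cauchy p (A i)" if "i \<le> n" for i
    using that
  proof (induction i)
    case 0 thus ?case using A0 X by simp
  next
    case (Suc i)
    have "padic_cauchy p (\<lambda>k. A i k - b i)" using Suc by (intro cauchy_shift) simp
    hence "padic_cauchy p (padic_inv (\<lambda>k. A i k - b i))"
      using cauchy_inv[OF p] nt[of i] Suc.prems by simp
    thus ?case using rec[of i] Suc.prems by simp
  qed
  have ev1: "eventually (\<lambda>k. A i k \<noteq> b i \<and> A (Suc i) k = inverse (A i k - b i)) sequentially" if "i < n" for i
  proof -
    have "eventually (\<lambda>k. A i k - b i \<noteq> 0) sequentially"
      using cauchy_eventually_nz[OF p cauchy_shift[OF cau] nt[OF that]] that by simp
    moreover have "A (Suc i) k = inverse (A i k - b i)" for k using rec[OF that] by (simp add: padic_inv_def)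
    ultimately show ?thesis by (simp add: eventually_mono)
  qed
  have ev2: "eventually (\<lambda>k. pabs p (A i k - b i) < 1) sequentially" if "i \<le> n" for i
  proof -
    have "padic_abs p (\<lambda>k. A i k - b i) < 1" using browkin_s_prop[OF p o cau[OF that]] st[OF that] by simp
    thus ?thesis using order_tendstoD(2)[OF cauchy_lim[OF p cauchy_shift[OF cau[OF that], of "b i"]]] by simp
  qed
  have "eventually (\<lambda>k. \<forall>i\<in>{..<n}. A i k \<noteq> b i \<and> A (Suc i) k = inverse (A i k - b i)) sequentially"
    using ev1 by (intro eventually_ball_finite) auto
  moreover have "eventually (\<lambda>k. \<forall>i\<in>{..n}. pabs p (A i k - b i) < 1) sequentially"
    using ev2 by (intro eventually_ball_finite) auto
  ultimately have "eventually (\<lambda>k. (\<forall>i<n. A i k \<noteq> b i \<and> A (Suc i) k = inverse (A i k - b i))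
             \<and> (\<forall>i\<le>n. pabs p (A i k - b i) < 1)) sequentially"
    unfolding Ball_def lessThan_iff atMost_iff by (rule eventually_conj)
  thus ?thesis using A0 by blast
qed

theorem lemma1:
  fixes p n :: nat and X Y :: "nat \<Rightarrow> rat" and b :: "nat \<Rightarrow> rat"
  assumes "prime p" and "odd p"
    and "padic_cauchy p X" and "padic_cauchy p Y"
    and "\<forall>i\<le>n. browkin_pq p X i = Some (b i) \<and> browkin_pq p Y i = Some (b i)"
  shows "padic_abs p (\<lambda>k. X k - Y k) * (pabs p (Bq b (n + 2)))\<^sup>2 < 1"
proof -
  note p = assms(1) and o = assms(2)
  obtain AX where AX: "AX 0 = X" "eventually (\<lambda>k. (\<forall>i<n. AX i k \<noteq> b i \<and> AX (Suc i) k = inverse (AX i k - b i))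
             \<and> (\<forall>i\<le>n. pabs p (AX i k - b i) < 1)) sequentially"
    using seq_eventually[OF p o assms(3)] assms(5) by blast
  obtain AY where AY: "AY 0 = Y" "eventually (\<lambda>k. (\<forall>i<n. AY i k \<noteq> b i \<and> AY (Suc i) k = inverse (AY i k - b i))
             \<and> (\<forall>i\<le>n. pabs p (AY i k - b i) < 1)) sequentially"
    using seq_eventually[OF p o assms(4)] assms(5) by blast
  define c where "c = (pabs p (Bq b (n + 2)))\<^sup>2"
  have key: "pabs p (X k - Y k) * c \<le> 1 / real p"
    if h1: "(\<forall>i<n. AX i k \<noteq> b i \<and> AX (Suc i) k = inverse (AX i k - b i)) \<and> (\<forall>i\<le>n. pabs p (AX i k - b i) < 1)"
    and h2: "(\<forall>i<n. AY i k \<noteq> b i \<and> AY (Suc i) k = inverse (AY i k - b i)) \<and> (\<forall>i\<le>n. pabs p (AY i k - b i) < 1)" for k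
  proof -
    have "pabs p ((\<lambda>i. AX i k) 0 - (\<lambda>i. AY i k) 0) * (pabs p (Bq b (n + 2)))\<^sup>2 < 1"
      by (rule rat_cf[OF p]) (use h1 h2 in auto)
    hence "pabs p ((X k - Y k) * (Bq b (n + 2))\<^sup>2) < 1"
      using AX(1) AY(1) by (simp add: pabs_mult[OF p] power2_eq_square)
    hence "pabs p ((X k - Y k) * (Bq b (n + 2))\<^sup>2) \<le> 1 / real p" by (rule pabs_lt1[OF p])
    thus "pabs p (X k - Y k) * c \<le> 1 / real p" unfolding c_def by (simp add: pabs_mult[OF p] power2_eq_square)
  qed
  have ev: "eventually (\<lambda>k. pabs p (X k - Y k) * c \<le> 1 / real p) sequentially"
    by (rule eventually_mono[OF eventually_conj[OF AX(2) AY(2)]]) (use key in blast)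
  have lim: "(\<lambda>k. pabs p (X k - Y k) * c) \<longlonglongrightarrow> padic_abs p (\<lambda>k. X k - Y k) * c"
    using cauchy_lim[OF p cauchy_diff[OF p assms(3) assms(4)]] by (intro tendsto_mult_right) simp
  have "padic_abs p (\<lambda>k. X k - Y k) * c \<le> 1 / real p"
    using ev unfolding eventually_sequentially by (intro LIMSEQ_le_const2[OF lim]) auto
  moreover have "1 / real p < 1" using p prime_gt_1_nat[of p] by simp
  ultimately show ?thesis unfolding c_def by linarith
qed

end
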